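(* Let $\mathcal{D}$ be an $S(2,k,v)$ on element set $V$ and $G_1=1$-$\mathrm{BIG}(\mathcal{D})$. (a) If $\mathcal{D}$ has a parallel class, then $\alpha(G_1)=v/k$, and for every $\alpha$-set $I$ of $G_1$, every vertex of $V(G_1)\setminus I$ is adjacent to exactly $k$ vertices of $I$; in particular $|X_1|=\dots=|X_{k-1}|=0$ and $|X_k|=\frac{v(v-k)}{k(k-1)}$. (b) If $\mathcal{D}$ has a near parallel class, then $\alpha(G_1)=(v-1)/k$, and for every $\alpha$-set $I$, every vertex of $V(G_1)\setminus I$ is adjacent to either $k-1$ or $k$ vertices of $I$, with $|X_1|=\dots=|X_{k-2}|=0$, $|X_{k-1}|=\frac{v-1}{k-1}$ and $|X_k|=\frac{(v-1)(v-2k+1)}{k(k-1)}$.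
   Context: A Steiner $2$-design $S(2,k,v)$ ($2<k<v$) is a pair $(V,\mathcal{B})$ with $|V|=v$ and $\mathcal{B}$ a collection of $k$-subsets of $V$ (blocks) such that every $2$-subset of $V$ lies in exactly one block. A partial parallel class is a set of pairwise disjoint blocks; a parallel class is a set of blocks partitioning $V$; a near parallel class is a partial parallel class whose union is $V$ minus a single element. The $1$-block intersection graph $1$-$\mathrm{BIG}(\mathcal{D})$ has the blocks as vertices, two blocks adjacent iff they intersect in exactly one element. $\alpha(G)$ is the independence number and an $\alpha$-set is a maximum independent set. For an $\alpha$-set $I$ of a graph $G$ and $i\ge1$, $X_i$ is the set of vertices $u\in V(G)\setminus I$ adjacent to exactly $i$ vertices of $I$. *)

theory Defs
  imports Complex_Main
begin

definition steiner_2_design :: "'a set \<Rightarrow> 'a set set \<Rightarrow> nat \<Rightarrow> nat \<Rightarrow> bool" where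
  "steiner_2_design V B k v \<longleftrightarrow>
     finite V \<and> card V = v \<and> 2 < k \<and> k < v \<and>
     (\<forall>b\<in>B. b \<subseteq> V \<and> card b = k) \<and>
     (\<forall>x\<in>V. \<forall>y\<in>V. x \<noteq> y \<longrightarrow> (\<exists>!b. b \<in> B \<and> {x, y} \<subseteq> b))"

definition partial_parallel_class :: "'a set set \<Rightarrow> 'a set set \<Rightarrow> bool" where
  "partial_parallel_class B P \<longleftrightarrow> P \<subseteq> B \<and> (\<forall>b\<in>P. \<forall>c\<in>P. b \<noteq> c \<longrightarrow> b \<inter> c = {})"

definition parallel_class :: "'a set \<Rightarrow> 'a set set \<Rightarrow> 'a set set \<Rightarrow> bool" where
  "parallel_class V B P \<longleftrightarrow> partial_parallel_class B P \<and> \<Union>P = V"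

definition near_parallel_class :: "'a set \<Rightarrow> 'a set set \<Rightarrow> 'a set set \<Rightarrow> bool" where
  "near_parallel_class V B P \<longleftrightarrow> partial_parallel_class B P \<and> (\<exists>x\<in>V. \<Union>P = V - {x})"

text \<open>The 1-block intersection graph: vertex set B, adjacency = meeting in exactly one point.\<close>
definition big1_adj :: "'a set set \<Rightarrow> 'a set \<Rightarrow> 'a set \<Rightarrow> bool" where
  "big1_adj B b c \<longleftrightarrow> b \<in> B \<and> c \<in> B \<and> card (b \<inter> c) = 1"

definition big1_indep :: "'a set set \<Rightarrow> 'a set set \<Rightarrow> bool" where
  "big1_indep B I \<longleftrightarrow> I \<subseteq> B \<and> (\<forall>b\<in>I. \<forall>c\<in>I. \<not> big1_adj B b c)"

definition big1_alpha :: "'a set set \<Rightarrow> nat" where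
  "big1_alpha B = Max (card ` {I. big1_indep B I})"

definition big1_alpha_set :: "'a set set \<Rightarrow> 'a set set \<Rightarrow> bool" where
  "big1_alpha_set B I \<longleftrightarrow> big1_indep B I \<and> card I = big1_alpha B"

definition nbrs_in :: "'a set set \<Rightarrow> 'a set set \<Rightarrow> 'a set \<Rightarrow> nat" where
  "nbrs_in B I u = card {c\<in>I. big1_adj B u c}"

definition X_set :: "'a set set \<Rightarrow> 'a set set \<Rightarrow> nat \<Rightarrow> 'a set set" where
  "X_set B I i = {u \<in> B - I. nbrs_in B I u = i}"

end

theory Submission
  imports Defs
begin

lemma card_filter_sum: "finite A \<Longrightarrow> card {a\<in>A. P a} = (\<Sum>a\<in>A. if P a then 1 else 0)"
  by (simp add: sum.If_cases Int_def)

lemma alg: "(k::real) \<noteq> 0 \<Longrightarrow> m \<noteq> 0 \<Longrightarrow> v*(v-1)/(k*m) - (v-1)/k - (v-1)/m = (v - 1) * (v - k - m) / (k * m)"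
proof -
  assume a: "k \<noteq> 0" "m \<noteq> 0"
  have "(v-1)/k = (v-1)*m/(k*m)" "(v-1)/m = (v-1)*k/(k*m)" using a by auto
  then show ?thesis by (simp add: diff_divide_distrib[symmetric] algebra_simps)
qed

context
  fixes V :: "'a set" and B :: "'a set set" and k v :: nat
  assumes S: "steiner_2_design V B k v"
begin

lemma finV: "finite V" and cardV: "card V = v" and k2: "2 < k" and kv: "k < v"
  and blk: "\<And>b. b \<in> B \<Longrightarrow> b \<subseteq> V \<and> card b = k"
  and uniq: "\<And>x y. x \<in> V \<Longrightarrow> y \<in> V \<Longrightarrow> x \<noteq> y \<Longrightarrow> \<exists>!b. b \<in> B \<and> {x, y} \<subseteq> b"
  using S unfolding steiner_2_design_def by auto

lemma finB: "finite B"
proof -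
  have "B \<subseteq> Pow V" using blk by auto
  then show ?thesis using finV finite_subset by blast
qed

lemma finb: "b \<in> B \<Longrightarrow> finite b"
  using blk finV finite_subset by blast

lemma inter_le1:
  assumes "b \<in> B" "c \<in> B" "b \<noteq> c" shows "card (b \<inter> c) \<le> 1"
proof (rule ccontr)
  assume "\<not> card (b \<inter> c) \<le> 1"
  moreover have "finite (b \<inter> c)" using finb assms by blast
  ultimately obtain x y where xy: "x \<in> b \<inter> c" "y \<in> b \<inter> c" "x \<noteq> y"
    using card_le_Suc0_iff_eq by (metis One_nat_def)
  have "x \<in> V" "y \<in> V" using xy blk assms by auto
  then have "\<exists>!d. d \<in> B \<and> {x, y} \<subseteq> d" using uniq xy by blast
  then show False using assms xy by auto
qed

lemma indep_disj:
  assumes "big1_indep B I" "b \<in> I" "c \<in> I" "b \<noteq> c" shows "b \<inter> c = {}"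
proof -
  have bc: "b \<in> B" "c \<in> B" using assms unfolding big1_indep_def by auto
  have "card (b \<inter> c) \<noteq> 1" using assms bc unfolding big1_indep_def big1_adj_def by auto
  then have "card (b \<inter> c) = 0" using inter_le1[OF bc assms(4)] by linarith
  then show ?thesis using finb bc by auto
qed

lemma indep_fin: "big1_indep B I \<Longrightarrow> finite I"
  unfolding big1_indep_def using finB finite_subset by blast

lemma card_Union_indep:
  assumes "big1_indep B I" shows "card (\<Union>I) = card I * k" "\<Union>I \<subseteq> V"
proof -
  have IB: "I \<subseteq> B" using assms unfolding big1_indep_def by auto
  have "card (\<Union>I) = sum card I"
    apply (rule card_Union_disjoint)
    using indep_disj[OF assms] IB finb by (auto simp: pairwise_def disjnt_def)
  also have "\<dots> = sum (\<lambda>_. k) I" using IB blk by (intro sum.cong) auto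
  finally show "card (\<Union>I) = card I * k" by simp
  show "\<Union>I \<subseteq> V" using IB blk by auto
qed

lemma indep_le: "big1_indep B I \<Longrightarrow> card I * k \<le> v"
proof -
  assume a: "big1_indep B I"
  have "card (\<Union>I) \<le> card V" using card_mono[OF finV card_Union_indep(2)[OF a]] .
  then show ?thesis using card_Union_indep(1)[OF a] cardV by simp
qed

lemma nbrs:
  assumes "big1_indep B I" "u \<in> B - I" shows "nbrs_in B I u = card (u \<inter> \<Union>I)"
proof -
  have IB: "I \<subseteq> B" using assms unfolding big1_indep_def by auto
  have fI: "finite I" using indep_fin[OF assms(1)] .
  have e: "u \<inter> \<Union>I = (\<Union>c\<in>I. u \<inter> c)" by auto
  have "card (\<Union>c\<in>I. u \<inter> c) = (\<Sum>c\<in>I. card (u \<inter> c))"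
  proof (rule card_UN_disjoint[OF fI])
    have "finite u" using finb assms(2) by simp
    then show "\<forall>i\<in>I. finite (u \<inter> i)" by simp
    show "\<forall>i\<in>I. \<forall>j\<in>I. i \<noteq> j \<longrightarrow> (u \<inter> i) \<inter> (u \<inter> j) = {}"
    proof (intro ballI impI)
      fix i j assume "i \<in> I" "j \<in> I" "i \<noteq> j"
      then have "i \<inter> j = {}" using indep_disj[OF assms(1)] by simp
      then show "(u \<inter> i) \<inter> (u \<inter> j) = {}" by auto
    qed
  qed
  then have "card (u \<inter> \<Union>I) = (\<Sum>c\<in>I. card (u \<inter> c))" unfolding e .
  also have "\<dots> = (\<Sum>c\<in>I. if big1_adj B u c then 1 else 0)"
  proof (rule sum.cong)
    fix c assume c: "c \<in> I"
    have cB: "u \<in> B" "c \<in> B" "u \<noteq> c" using c IB assms(2) by auto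
    have "card (u \<inter> c) \<le> 1" using inter_le1[OF cB] .
    then show "card (u \<inter> c) = (if big1_adj B u c then 1 else 0)"
      using cB unfolding big1_adj_def by simp
  qed simp
  also have "\<dots> = nbrs_in B I u" unfolding nbrs_in_def using card_filter_sum[OF fI] by simp
  finally show ?thesis by simp
qed

lemma rep:
  assumes x: "x \<in> V" shows "card {b\<in>B. x \<in> b} * (k - 1) = v - 1"
proof -
  let ?Bx = "{b\<in>B. x \<in> b}"
  have fBx: "finite ?Bx" using finB by simp
  have eq: "V - {x} = (\<Union>b\<in>?Bx. b - {x})"
  proof
    show "V - {x} \<subseteq> (\<Union>b\<in>?Bx. b - {x})"
    proof
      fix y assume y: "y \<in> V - {x}"
      then obtain b where "b \<in> B" "{x, y} \<subseteq> b" using uniq[of x y] x by blast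
      then show "y \<in> (\<Union>b\<in>?Bx. b - {x})" using y by auto
    qed
    show "(\<Union>b\<in>?Bx. b - {x}) \<subseteq> V - {x}" using blk by auto
  qed
  have "card (V - {x}) = (\<Sum>b\<in>?Bx. card (b - {x}))"
    unfolding eq
  proof (rule card_UN_disjoint[OF fBx])
    show "\<forall>i\<in>?Bx. finite (i - {x})" using finb by auto
    show "\<forall>i\<in>?Bx. \<forall>j\<in>?Bx. i \<noteq> j \<longrightarrow> (i - {x}) \<inter> (j - {x}) = {}"
    proof (intro ballI impI)
      fix i j assume i: "i \<in> ?Bx" and j: "j \<in> ?Bx" and ij: "i \<noteq> j"
      show "(i - {x}) \<inter> (j - {x}) = {}"
      proof (rule ccontr)
        assume "(i - {x}) \<inter> (j - {x}) \<noteq> {}"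
        then obtain y where y: "y \<in> i" "y \<in> j" "y \<noteq> x" by auto
        have "y \<in> V" using y i blk by auto
        moreover have "x \<noteq> y" using y(3) by simp
        ultimately have u: "\<exists>!d. d \<in> B \<and> {x, y} \<subseteq> d" using uniq[OF x] by blast
        have "i \<in> B \<and> {x, y} \<subseteq> i" "j \<in> B \<and> {x, y} \<subseteq> j" using i j y by auto
        then show False using u ij by blast
      qed
    qed
  qed
  also have "\<dots> = (\<Sum>b\<in>?Bx. k - 1)"
  proof (rule sum.cong)
    fix b assume b: "b \<in> ?Bx"
    then show "card (b - {x}) = k - 1" using blk[of b] finb[of b] by (simp add: card_Diff_singleton)
  qed simp
  also have "\<dots> = card ?Bx * (k - 1)" by simp
  finally have "card (V - {x}) = card ?Bx * (k - 1)" .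
  moreover have "card (V - {x}) = v - 1" using cardV finV x by (simp add: card_Diff_singleton)
  ultimately show ?thesis by simp
qed

lemma rep_real: "x \<in> V \<Longrightarrow> real (card {b\<in>B. x \<in> b}) = (real v - 1) / (real k - 1)"
proof -
  assume x: "x \<in> V"
  have "real (card {b\<in>B. x \<in> b} * (k - 1)) = real (v - 1)" using rep[OF x] by simp
  then have "real (card {b\<in>B. x \<in> b}) * (real k - 1) = real v - 1"
    using k2 kv by (simp add: of_nat_diff)
  moreover have "real k - 1 \<noteq> 0" using k2 by simp
  ultimately show ?thesis by (simp add: field_simps)
qed

lemma cardB: "real (card B) = real v * (real v - 1) / (real k * (real k - 1))"
proof -
  have "(\<Sum>b\<in>B. card b) = (\<Sum>b\<in>B. \<Sum>x\<in>V. if x \<in> b then 1 else 0)"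
  proof (rule sum.cong)
    fix b assume b: "b \<in> B"
    have "{x\<in>V. x \<in> b} = b" using blk[OF b] by auto
    then have "card b = card {x\<in>V. x \<in> b}" by simp
    then show "card b = (\<Sum>x\<in>V. if x \<in> b then 1 else 0)" using card_filter_sum[OF finV] by simp
  qed simp
  also have "\<dots> = (\<Sum>x\<in>V. \<Sum>b\<in>B. if x \<in> b then 1 else 0)" by (rule sum.swap)
  also have "\<dots> = (\<Sum>x\<in>V. card {b\<in>B. x \<in> b})"
    using card_filter_sum[OF finB] by simp
  finally have e: "(\<Sum>b\<in>B. card b) = (\<Sum>x\<in>V. card {b\<in>B. x \<in> b})" .
  have "(\<Sum>b\<in>B. card b) = card B * k" using blk by simp
  then have "real (card B) * real k = (\<Sum>x\<in>V. real (card {b\<in>B. x \<in> b}))"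
    using e by (metis of_nat_mult of_nat_sum)
  also have "\<dots> = (\<Sum>x\<in>V. (real v - 1) / (real k - 1))" using rep_real by simp
  also have "\<dots> = real v * ((real v - 1) / (real k - 1))" using cardV by simp
  finally have "real (card B) * real k = real v * ((real v - 1) / (real k - 1))" .
  moreover have "real k \<noteq> 0" "real k - 1 \<noteq> 0" using k2 by auto
  ultimately show ?thesis by (simp add: field_simps)
qed

lemma finS: "finite {I. big1_indep B I}"
proof -
  have "{I. big1_indep B I} \<subseteq> Pow B" unfolding big1_indep_def by auto
  then show ?thesis using finB finite_subset by blast
qed

lemma ppc_indep: "partial_parallel_class B P \<Longrightarrow> big1_indep B P"
  unfolding partial_parallel_class_def big1_indep_def big1_adj_def
  using blk k2 by fastforce

lemma alpha_eq:
  assumes "big1_indep B P" "\<And>I. big1_indep B I \<Longrightarrow> card I \<le> card P"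
  shows "big1_alpha B = card P"
  unfolding big1_alpha_def using assms finS by (intro Max_eqI) auto

end

theorem mainTheorem5:
  fixes V :: "'a set" and B :: "'a set set" and k v :: nat
  assumes "steiner_2_design V B k v"
  shows "((\<exists>P. parallel_class V B P) \<longrightarrow>
            real (big1_alpha B) = real v / real k \<and>
            (\<forall>I. big1_alpha_set B I \<longrightarrow>
               (\<forall>u\<in>B - I. nbrs_in B I u = k) \<and>
               (\<forall>i. 1 \<le> i \<and> i \<le> k - 1 \<longrightarrow> card (X_set B I i) = 0) \<and>
               real (card (X_set B I k)) = real v * (real v - real k) / (real k * (real k - 1))))
       \<and> ((\<exists>P. near_parallel_class V B P) \<longrightarrow>
            real (big1_alpha B) = (real v - 1) / real k \<and>
            (\<forall>I. big1_alpha_set B I \<longrightarrow>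
               (\<forall>u\<in>B - I. nbrs_in B I u = k - 1 \<or> nbrs_in B I u = k) \<and>
               (\<forall>i. 1 \<le> i \<and> i \<le> k - 2 \<longrightarrow> card (X_set B I i) = 0) \<and>
               real (card (X_set B I (k - 1))) = (real v - 1) / (real k - 1) \<and>
               real (card (X_set B I k)) =
                 (real v - 1) * (real v - 2 * real k + 1) / (real k * (real k - 1))))"
proof -
  note S = assms
  have k2: "2 < k" and kv: "k < v" and finV: "finite V" and cardV: "card V = v"
    using S unfolding steiner_2_design_def by auto
  have blk: "\<And>b. b \<in> B \<Longrightarrow> b \<subseteq> V \<and> card b = k"
    using S unfolding steiner_2_design_def by auto
  have kne: "real k \<noteq> 0" "real k - 1 \<noteq> 0" using k2 by auto
  show ?thesis
  proof (intro conjI impI)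
    assume "\<exists>P. parallel_class V B P"
    then obtain P where P: "parallel_class V B P" by blast
    have Pi: "big1_indep B P" using ppc_indep[OF S] P unfolding parallel_class_def by blast
    have cP: "card P * k = v" using card_Union_indep[OF S Pi] P cardV
      unfolding parallel_class_def by simp
    have al: "big1_alpha B = card P"
    proof (rule alpha_eq[OF S Pi])
      fix I assume "big1_indep B I"
      then have "card I * k \<le> card P * k" using indep_le[OF S] cP by simp
      then show "card I \<le> card P" using k2 by simp
    qed
    have rP: "real (card P) = real v / real k"
      using cP kne by (metis of_nat_mult nonzero_eq_divide_eq)
    show "real (big1_alpha B) = real v / real k" using al rP by simp
    show "\<forall>I. big1_alpha_set B I \<longrightarrow>
               (\<forall>u\<in>B - I. nbrs_in B I u = k) \<and>
               (\<forall>i. 1 \<le> i \<and> i \<le> k - 1 \<longrightarrow> card (X_set B I i) = 0) \<and>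
               real (card (X_set B I k)) = real v * (real v - real k) / (real k * (real k - 1))"
    proof (intro allI impI)
      fix I assume Ia: "big1_alpha_set B I"
      have Ii: "big1_indep B I" and cI: "card I = card P"
        using Ia al unfolding big1_alpha_set_def by auto
      have IB: "I \<subseteq> B" using Ii unfolding big1_indep_def by auto
      have U: "\<Union>I = V"
        using card_Union_indep[OF S Ii] cI cP cardV finV by (metis card_subset_eq)
      have nb: "\<forall>u\<in>B - I. nbrs_in B I u = k"
      proof
        fix u assume u: "u \<in> B - I"
        have "u \<subseteq> V" using blk u by simp
        then have "u \<inter> \<Union>I = u" using U by auto
        then show "nbrs_in B I u = k" using nbrs[OF S Ii u] blk u by simp
      qed
      have Xk: "X_set B I k = B - I" using nb unfolding X_set_def by auto
      have "card (B - I) = card B - card I" using card_Diff_subset[OF finite_subset[OF IB finB[OF S]] IB] .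
      then have "real (card (X_set B I k)) = real (card B) - real (card I)"
        using Xk card_mono[OF finB[OF S] IB] by (simp add: of_nat_diff)
      also have "\<dots> = real v * (real v - real k) / (real k * (real k - 1))"
        using cardB[OF S] cI rP kne by (simp add: field_simps)
      finally have "real (card (X_set B I k)) = real v * (real v - real k) / (real k * (real k - 1))" .
      moreover have "\<forall>i. 1 \<le> i \<and> i \<le> k - 1 \<longrightarrow> card (X_set B I i) = 0"
      proof (intro allI impI)
        fix i assume "1 \<le> i \<and> i \<le> k - 1"
        then have "i \<noteq> k" using k2 by auto
        then have "X_set B I i = {}" using nb unfolding X_set_def by auto
        then show "card (X_set B I i) = 0" by simp
      qed
      ultimately show "(\<forall>u\<in>B - I. nbrs_in B I u = k) \<and>
               (\<forall>i. 1 \<le> i \<and> i \<le> k - 1 \<longrightarrow> card (X_set B I i) = 0) \<and>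
               real (card (X_set B I k)) = real v * (real v - real k) / (real k * (real k - 1))"
        using nb by blast
    qed
  next
    assume "\<exists>P. near_parallel_class V B P"
    then obtain P x where P: "partial_parallel_class B P" and x: "x \<in> V" "\<Union>P = V - {x}"
      unfolding near_parallel_class_def by blast
    have Pi: "big1_indep B P" using ppc_indep[OF S] P by blast
    have cP: "card P * k = v - 1" using card_Union_indep[OF S Pi] x cardV finV by simp
    have al: "big1_alpha B = card P"
    proof (rule alpha_eq[OF S Pi])
      fix I assume "big1_indep B I"
      then have le: "card I * k \<le> v" using indep_le[OF S] by simp
      show "card I \<le> card P"
      proof (rule ccontr)
        assume "\<not> card I \<le> card P"
        then have "Suc (card P) \<le> card I" by simp
        then have "Suc (card P) * k \<le> card I * k" by (rule mult_le_mono1)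
        then show False using le cP k2 kv by simp
      qed
    qed
    have rP: "real (card P) = (real v - 1) / real k"
    proof -
      have "real (card P * k) = real (v - 1)" using cP by simp
      moreover have "real (v - 1) = real v - 1" using kv by (simp add: of_nat_diff)
      ultimately have "real (card P) * real k = real v - 1" by simp
      then show ?thesis using kne by (simp add: field_simps)
    qed
    show "real (big1_alpha B) = (real v - 1) / real k" using al rP by simp
    show "\<forall>I. big1_alpha_set B I \<longrightarrow>
               (\<forall>u\<in>B - I. nbrs_in B I u = k - 1 \<or> nbrs_in B I u = k) \<and>
               (\<forall>i. 1 \<le> i \<and> i \<le> k - 2 \<longrightarrow> card (X_set B I i) = 0) \<and>
               real (card (X_set B I (k - 1))) = (real v - 1) / (real k - 1) \<and>
               real (card (X_set B I k)) =
                 (real v - 1) * (real v - 2 * real k + 1) / (real k * (real k - 1))"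
    proof (intro allI impI)
      fix I assume Ia: "big1_alpha_set B I"
      have Ii: "big1_indep B I" and cI: "card I = card P"
        using Ia al unfolding big1_alpha_set_def by auto
      have IB: "I \<subseteq> B" using Ii unfolding big1_indep_def by auto
      have fI: "finite I" using finite_subset[OF IB finB[OF S]] .
      have UV: "\<Union>I \<subseteq> V" and cU: "card (\<Union>I) = v - 1"
        using card_Union_indep[OF S Ii] cI cP by auto
      have "card (V - \<Union>I) = 1" using card_Diff_subset[OF finite_subset[OF UV finV] UV] cU cardV kv by simp
      then obtain y where y: "V - \<Union>I = {y}" using card_1_singleton_iff by (metis One_nat_def)
      have yV: "y \<in> V" and yI: "y \<notin> \<Union>I" using y by auto
      have U: "\<Union>I = V - {y}" using y UV by auto
      have nbv: "\<And>u. u \<in> B - I \<Longrightarrow> nbrs_in B I u = (if y \<in> u then k - 1 else k)"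
      proof -
        fix u assume u: "u \<in> B - I"
        have "u \<subseteq> V" using blk u by simp
        then have "u \<inter> \<Union>I = u - {y}" using U by auto
        then show "nbrs_in B I u = (if y \<in> u then k - 1 else k)"
          using nbrs[OF S Ii u] blk u finb[OF S] by (simp add: card_Diff_singleton_if)
      qed
      let ?By = "{b\<in>B. y \<in> b}"
      have ByI: "?By \<subseteq> B - I" using yI by auto
      have Xk1: "X_set B I (k - 1) = ?By"
      proof (rule set_eqI)
        fix u
        show "u \<in> X_set B I (k - 1) \<longleftrightarrow> u \<in> ?By"
        proof
          assume a: "u \<in> X_set B I (k - 1)"
          then have uB: "u \<in> B - I" and n: "nbrs_in B I u = k - 1" unfolding X_set_def by auto
          have "y \<in> u"
          proof (rule ccontr)
            assume "y \<notin> u"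
            then have "nbrs_in B I u = k" using nbv[OF uB] by simp
            then show False using n k2 by simp
          qed
          then show "u \<in> ?By" using uB by simp
        next
          assume a: "u \<in> ?By"
          then have uB: "u \<in> B - I" using ByI by blast
          have "y \<in> u" using a by simp
          then have "nbrs_in B I u = k - 1" using nbv[OF uB] by simp
          then show "u \<in> X_set B I (k - 1)" using uB unfolding X_set_def by simp
        qed
      qed
      have Xk: "X_set B I k = B - I - ?By"
      proof (rule set_eqI)
        fix u
        show "u \<in> X_set B I k \<longleftrightarrow> u \<in> B - I - ?By"
        proof
          assume a: "u \<in> X_set B I k"
          then have uB: "u \<in> B - I" and n: "nbrs_in B I u = k" unfolding X_set_def by auto
          have "y \<notin> u"
          proof
            assume "y \<in> u"
            then have "nbrs_in B I u = k - 1" using nbv[OF uB] by simp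
            then show False using n k2 by simp
          qed
          then show "u \<in> B - I - ?By" using uB by simp
        next
          assume a: "u \<in> B - I - ?By"
          then have uB: "u \<in> B - I" and "y \<notin> u" by auto
          then have "nbrs_in B I u = k" using nbv[OF uB] by simp
          then show "u \<in> X_set B I k" using uB unfolding X_set_def by simp
        qed
      qed
      have fBy: "finite ?By" using finB[OF S] by simp
      have c1: "card (B - I) = card B - card I" using card_Diff_subset[OF fI IB] .
      have c2: "card (B - I - ?By) = card (B - I) - card ?By" using card_Diff_subset[OF fBy ByI] .
      have m1: "card I \<le> card B" using card_mono[OF finB[OF S] IB] .
      have m2: "card ?By \<le> card (B - I)" using card_mono[OF _ ByI] finB[OF S] by simp
      have "real (card (X_set B I k)) = real (card B) - real (card I) - real (card ?By)"
        using Xk c1 c2 m1 m2 by (simp add: of_nat_diff)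
      also have "\<dots> = (real v - 1) * (real v - 2 * real k + 1) / (real k * (real k - 1))"
      proof -
        have "real (card B) - real (card I) - real (card ?By) =
          real v * (real v - 1) / (real k * (real k - 1)) - (real v - 1) / real k - (real v - 1) / (real k - 1)"
          using cardB[OF S] cI rP rep_real[OF S yV] by simp
        also have "\<dots> = (real v - 1) * (real v - real k - (real k - 1)) / (real k * (real k - 1))"
          by (rule alg[OF kne])
        also have "real v - real k - (real k - 1) = real v - 2 * real k + 1" by simp
        finally show ?thesis .
      qed
      finally have r1: "real (card (X_set B I k)) = (real v - 1) * (real v - 2 * real k + 1) / (real k * (real k - 1))" .
      have r2: "real (card (X_set B I (k - 1))) = (real v - 1) / (real k - 1)"
        using Xk1 rep_real[OF S yV] by simp
      have r3: "\<forall>i. 1 \<le> i \<and> i \<le> k - 2 \<longrightarrow> card (X_set B I i) = 0"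
      proof (intro allI impI)
        fix i assume "1 \<le> i \<and> i \<le> k - 2"
        then have ik: "i \<noteq> k" "i \<noteq> k - 1" using k2 by auto
        have "X_set B I i = {}"
        proof (rule ccontr)
          assume "X_set B I i \<noteq> {}"
          then obtain u where u: "u \<in> B - I" "nbrs_in B I u = i" unfolding X_set_def by auto
          show False using nbv[OF u(1)] u(2) ik by (cases "y \<in> u") auto
        qed
        then show "card (X_set B I i) = 0" by simp
      qed
      show "(\<forall>u\<in>B - I. nbrs_in B I u = k - 1 \<or> nbrs_in B I u = k) \<and>
               (\<forall>i. 1 \<le> i \<and> i \<le> k - 2 \<longrightarrow> card (X_set B I i) = 0) \<and>
               real (card (X_set B I (k - 1))) = (real v - 1) / (real k - 1) \<and>
               real (card (X_set B I k)) =
                 (real v - 1) * (real v - 2 * real k + 1) / (real k * (real k - 1))"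
        using nbv r1 r2 r3 by auto
    qed
  qed
qed

end
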